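(* For every even integer $n\ge4$, $\mu_n$-almost every choice function $\eta\in\mathscr{C}_n$ is random.
   Context: Let $\mathcal{A}_n=\{1,\dots,5n-6\}$, $\mathcal{A}_n^m$ the words of length $m$ over $\mathcal{A}_n$ ($\mathcal{A}_n^0=\{\varepsilon\}$), $\mathcal{A}_n^*=\bigcup_{m\ge0}\mathcal{A}_n^m$, $\mathcal{A}_n^{\mathbb{N}}$ the infinite words; for a word $w=i_1i_2\cdots$, $w(j)=i_1\cdots i_j$. For $u\in\mathcal{A}_n^j$ and $m\ge j$, $\mathcal{A}^m_{n,u}=\{v\in\mathcal{A}_n^m:v(j)=u\}$. $\nu_n$ is the probability measure on $\mathcal{A}_n^{\mathbb{N}}$ with $\nu_n(\{\tau:\tau(|u|)=u\})=(5n-6)^{-|u|}$ for all $u\in\mathcal{A}_n^*$. $\mathscr{C}_n$ is the set of choice functions $\eta:\mathcal{A}_n^*\to\{1,2\}$, i.e. $\{1,2\}^{\mathcal{A}_n^*}$, and $\mu_n$ is the product probability measure on it under which the values $\eta(u)$, $u\in\mathcal{A}_n^*$, are independent and each equals $1$ or $2$ with probability $1/2$. A choice function $\eta$ is random if for $\nu_n$-a.e. $w=i_1i_2\cdots\in\mathcal{A}_n^{\mathbb{N}}$ the following holds: for every $N\in\mathbb{N}$ and every integer $k\ge0$ there is an integer $\ell\ge N$ such that (R1) $\eta\equiv1$ on $\bigcup_{j=0}^{k-1}\mathcal{A}^{\ell+j}_{n,w(\ell)}$ and $\eta\equiv2$ on $\bigcup_{j=0}^{2N+k-1}\mathcal{A}^{\ell-N+j}_{n,w(\ell-N)}\setminus\bigcup_{j=0}^{k-1}\mathcal{A}^{\ell+j}_{n,w(\ell)}$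 (the first union being empty when $k=0$), and (R2) $i_{\ell-N+1}>4n-4$. *)

theory Defs
  imports "HOL-Probability.Probability"
begin

text \<open>Alphabet A_n = {1,...,5n-6}; finite words are lists over it, infinite words are
  sequences nat => nat (w 0 is the first letter i_1).\<close>

definition alph :: "nat \<Rightarrow> nat set" where
  "alph n = {1..5*n-6}"

definition pref :: "(nat \<Rightarrow> nat) \<Rightarrow> nat \<Rightarrow> nat list" where
  "pref w j = map w [0..<j]"

definition cyl :: "nat \<Rightarrow> nat \<Rightarrow> nat list \<Rightarrow> nat list set" where
  "cyl n m u = {v. set v \<subseteq> alph n \<and> length v = m \<and> take (length u) v = u}"

definition nu :: "nat \<Rightarrow> (nat \<Rightarrow> nat) measure" where
  "nu n = PiM UNIV (\<lambda>_. uniform_count_measure (alph n))"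

definition mu :: "nat \<Rightarrow> (nat list \<Rightarrow> nat) measure" where
  "mu n = PiM (lists (alph n)) (\<lambda>_. uniform_count_measure {1,2})"

definition random_choice :: "nat \<Rightarrow> (nat list \<Rightarrow> nat) \<Rightarrow> bool" where
  "random_choice n \<eta> \<longleftrightarrow>
     (AE w in nu n. \<forall>N\<ge>1. \<forall>k::nat. \<exists>l\<ge>N.
        (\<forall>j<k. \<forall>v\<in>cyl n (l+j) (pref w l). \<eta> v = 1) \<and>
        (\<forall>v \<in> (\<Union>j<2*N+k. cyl n (l-N+j) (pref w (l-N))) - (\<Union>j<k. cyl n (l+j) (pref w l)).
            \<eta> v = 2) \<and>
        w (l-N) > 4*n-4)"

end

theory Submission
  imports Defs
begin


lemma (in product_prob_space) coord_indep:
  assumes I: "I \<noteq> {}"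
  shows "P.indep_vars M (\<lambda>i x. x i) I"
proof (subst P.indep_vars_iff_distr_eq_PiM'[OF I])
  show "\<And>i. i \<in> I \<Longrightarrow> (\<lambda>x. x i) \<in> measurable (Pi\<^sub>M I M) (M i)"
    by (rule measurable_component_singleton)
  have "distr (Pi\<^sub>M I M) (Pi\<^sub>M I M) (\<lambda>x. restrict (\<lambda>i. x i) I) = distr (Pi\<^sub>M I M) (Pi\<^sub>M I M) (\<lambda>x. x)"
    by (rule distr_cong) (auto simp: space_PiM)
  also have "\<dots> = Pi\<^sub>M I M" by (rule distr_id)
  also have "\<dots> = (\<Pi>\<^sub>M i\<in>I. distr (Pi\<^sub>M I M) (M i) (\<lambda>x. x i))"
    by (rule PiM_cong) (auto simp: PiM_component)
  finally show "distr (Pi\<^sub>M I M) (Pi\<^sub>M I M) (\<lambda>x. restrict (\<lambda>i. x i) I) = (\<Pi>\<^sub>M i\<in>I. distr (Pi\<^sub>M I M) (M i) (\<lambda>x. x i))" .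
qed

lemma (in product_prob_space) AE_exists_block:
  assumes I: "I \<noteq> {}" and S: "\<And>m::nat. S m \<subseteq> I" "\<And>m. finite (S m)" "disjoint_family S"
  and B: "\<And>m. B m \<in> sets (PiM (S m) M)"
  and q: "0 < q" "\<And>m. q \<le> measure (PiM (S m) M) (B m)"
  shows "AE x in PiM I M. \<exists>m. restrict x (S m) \<in> B m"
proof -
  define X :: "nat \<Rightarrow> ('i \<Rightarrow> 'a) \<Rightarrow> ('i \<Rightarrow> 'a)" where "X = (\<lambda>m x. restrict (\<lambda>i. x i) (S m))"
  have ind: "P.indep_vars (\<lambda>m. PiM (S m) M) X UNIV"
    unfolding X_def
    by (rule P.indep_vars_restrict[OF coord_indep[OF I]]) (use S in \<open>auto simp: disjoint_family_on_def\<close>)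
  define C where "C = (\<lambda>m. X m -` (space (PiM (S m) M) - B m) \<inter> space (PiM I M))"
  have Xm: "X m \<in> measurable (PiM I M) (PiM (S m) M)" for m
    unfolding X_def using S by (intro measurable_restrict measurable_component_singleton) auto
  have Csets: "C m \<in> sets (PiM I M)" for m
    unfolding C_def using Xm B by (intro measurable_sets) auto
  have pB: "P.prob (X m -` B m \<inter> space (PiM I M)) = measure (PiM (S m) M) (B m)" for m
  proof -
    have "X m -` B m \<inter> space (PiM I M) = prod_emb I M (S m) (B m)"
      unfolding X_def prod_emb_def by (auto simp: space_PiM)
    then show ?thesis using emeasure_PiM_emb'[of "S m" "B m"] S B
      by (simp add: measure_def)
  qed
  have pC: "P.prob (C m) \<le> 1 - q" for m
  proof -
    have "C m = space (PiM I M) - (X m -` B m \<inter> space (PiM I M))"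
      unfolding C_def using Xm by (auto simp: measurable_def Pi_iff)
    then have "P.prob (C m) = 1 - P.prob (X m -` B m \<inter> space (PiM I M))"
      using P.prob_compl measurable_sets[OF Xm B] by simp
    then show ?thesis using pB[of m] q(2)[of m] by simp
  qed
  have pK: "P.prob (\<Inter>m. C m) \<le> (1 - q) ^ K" if "K > 0" for K
  proof -
    have "P.prob (\<Inter>m. C m) \<le> P.prob (\<Inter>m\<in>{..<K}. C m)"
      using Csets that by (intro P.finite_measure_mono) auto
    also have "\<dots> = (\<Prod>m\<in>{..<K}. P.prob (C m))"
      unfolding C_def using that B
      by (intro P.indep_varsD[OF ind]) auto
    also have "\<dots> \<le> (\<Prod>m\<in>{..<K}. 1 - q)"
      by (intro prod_mono) (auto simp: pC)
    finally show ?thesis by simp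
  qed
  have "prob_space (PiM (S 0) M)" by (intro prob_space_PiM prob_space)
  then have q1: "q \<le> 1" using q(2)[of 0] prob_space.prob_le_1[of "PiM (S 0) M" "B 0"]
    by linarith
  have zero: "P.prob (\<Inter>m. C m) = 0"
  proof (rule ccontr)
    assume "P.prob (\<Inter>m. C m) \<noteq> 0"
    then have pos: "P.prob (\<Inter>m. C m) > 0" using measure_nonneg[of "PiM I M" "\<Inter>m. C m"] by linarith
    obtain K where K: "(1 - q) ^ K < P.prob (\<Inter>m. C m)"
      using real_arch_pow_inv[OF pos, of "1-q"] q by auto
    have "(1 - q) ^ Suc K \<le> (1 - q) ^ K"
      using q q1 by (intro power_decreasing) auto
    with pK[of "Suc K"] K show False by linarith
  qed
  show ?thesis
  proof (rule AE_I[where N="\<Inter>m. C m"])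
    show "{x \<in> space (Pi\<^sub>M I M). \<not> (\<exists>m. restrict x (S m) \<in> B m)} \<subseteq> (\<Inter>m. C m)"
      unfolding C_def X_def using S by (auto simp: space_PiM PiE_iff extensional_def) blast
    show "emeasure (Pi\<^sub>M I M) (\<Inter>m. C m) = 0"
      using zero by (simp add: P.emeasure_eq_measure)
    show "(\<Inter>m. C m) \<in> sets (Pi\<^sub>M I M)" using Csets by auto
  qed
qed



lemma length_pref[simp]: "length (pref w l) = l"
  by (simp add: pref_def)

lemma take_pref: "a \<le> b \<Longrightarrow> take a (pref w b) = pref w a"
  by (simp add: pref_def take_map)

lemma cyl_sub_lists: "cyl n m u \<subseteq> lists (alph n)"
  by (auto simp: cyl_def)

lemma finite_alph: "finite (alph n)" by (simp add: alph_def)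

lemma finite_cyl: "finite (cyl n m u)"
proof -
  have "cyl n m u \<subseteq> {xs. set xs \<subseteq> alph n \<and> length xs = m}" by (auto simp: cyl_def)
  moreover have "finite {xs. set xs \<subseteq> alph n \<and> length xs = m}"
    by (rule finite_lists_length_eq[OF finite_alph])
  ultimately show ?thesis by (rule finite_subset)
qed

definition FU :: "nat \<Rightarrow> nat list \<Rightarrow> nat \<Rightarrow> nat list set" where
  "FU n u k = (\<Union>j<k. cyl n (length u + j) u)"

definition GU :: "nat \<Rightarrow> nat list \<Rightarrow> nat \<Rightarrow> nat \<Rightarrow> nat list set" where
  "GU n u N k = (\<Union>j<2*N+k. cyl n (length u - N + j) (take (length u - N) u))"

definition PatU :: "nat \<Rightarrow> nat \<Rightarrow> nat \<Rightarrow> (nat list \<Rightarrow> nat) \<Rightarrow> nat list \<Rightarrow> bool" where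
  "PatU n N k \<eta> u \<longleftrightarrow> (\<forall>v\<in>FU n u k. \<eta> v = 1) \<and> (\<forall>v\<in>GU n u N k - FU n u k. \<eta> v = 2)"

lemma finite_FU: "finite (FU n u k)" by (simp add: FU_def finite_cyl)
lemma finite_GU: "finite (GU n u N k)" by (simp add: GU_def finite_cyl)
lemma FU_sub: "FU n u k \<subseteq> lists (alph n)" using cyl_sub_lists by (fastforce simp: FU_def)
lemma GU_sub: "GU n u N k \<subseteq> lists (alph n)" using cyl_sub_lists by (fastforce simp: GU_def)

lemma PatU_pref:
  assumes "PatU n N k \<eta> (pref w l)" "N \<le> l"
  shows "(\<forall>j<k. \<forall>v\<in>cyl n (l+j) (pref w l). \<eta> v = 1) \<and>
        (\<forall>v \<in> (\<Union>j<2*N+k. cyl n (l-N+j) (pref w (l-N))) - (\<Union>j<k. cyl n (l+j) (pref w l)).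
            \<eta> v = 2)"
proof -
  have F: "FU n (pref w l) k = (\<Union>j<k. cyl n (l+j) (pref w l))" by (simp add: FU_def)
  have G: "GU n (pref w l) N k = (\<Union>j<2*N+k. cyl n (l-N+j) (pref w (l-N)))"
    by (simp add: GU_def take_pref)
  show ?thesis using assms(1) unfolding PatU_def F G by blast
qed

definition Blk :: "nat \<Rightarrow> (nat \<Rightarrow> nat) \<Rightarrow> nat \<Rightarrow> nat \<Rightarrow> nat \<Rightarrow> nat list set" where
  "Blk n w N k m = GU n (pref w (m*(2*N+k)+N)) N k \<union> FU n (pref w (m*(2*N+k)+N)) k"

lemma Blk_props:
  assumes "v \<in> Blk n w N k m"
  shows "set v \<subseteq> alph n \<and> m*(2*N+k) \<le> length v \<and> length v < m*(2*N+k) + (2*N+k)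
     \<and> take (m*(2*N+k)) v = pref w (m*(2*N+k))"
proof -
  define a where "a = m*(2*N+k)"
  have G: "GU n (pref w (a+N)) N k = (\<Union>j<2*N+k. cyl n (a+j) (pref w a))"
    by (simp add: GU_def take_pref)
  have F: "FU n (pref w (a+N)) k = (\<Union>j<k. cyl n (a+N+j) (pref w (a+N)))"
    by (simp add: FU_def)
  have "v \<in> GU n (pref w (a+N)) N k \<or> v \<in> FU n (pref w (a+N)) k"
    using assms unfolding Blk_def a_def by blast
  then show ?thesis
  proof
    assume "v \<in> GU n (pref w (a+N)) N k"
    then obtain j where j: "j < 2*N+k" and v: "v \<in> cyl n (a+j) (pref w a)" unfolding G by blast
    from v have "set v \<subseteq> alph n" "length v = a + j" "take a v = pref w a"
      unfolding cyl_def by auto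
    then show ?thesis using j unfolding a_def by simp
  next
    assume "v \<in> FU n (pref w (a+N)) k"
    then obtain j where j: "j < k" and v: "v \<in> cyl n (a+N+j) (pref w (a+N))" unfolding F by blast
    from v have 1: "set v \<subseteq> alph n" "length v = a + N + j" "take (a+N) v = pref w (a+N)"
      unfolding cyl_def by auto
    have "take a v = take a (take (a+N) v)" by (simp add: min_def)
    also have "\<dots> = pref w a" using 1(3) by (simp add: take_pref)
    finally show ?thesis using j 1 unfolding a_def by simp
  qed
qed

lemma Blk_div:
  assumes "v \<in> Blk n w N k m"
  shows "length v div (2*N+k) = m"
proof -
  from Blk_props[OF assms] have "m*(2*N+k) \<le> length v" "length v < m*(2*N+k) + (2*N+k)" by auto
  then show ?thesis
    by (intro div_nat_eqI) (simp_all add: mult.commute)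
qed

lemma finite_Blk: "finite (Blk n w N k m)"
  by (simp add: Blk_def finite_FU finite_GU)

lemma Blk_sub: "Blk n w N k m \<subseteq> lists (alph n)"
  using FU_sub GU_sub by (auto simp: Blk_def)

lemma card_Blk:
  "card (Blk n w N k m) \<le> card {xs. set xs \<subseteq> alph n \<and> length xs \<le> 2*N+k}"
proof (rule card_inj_on_le)
  show "inj_on (drop (m*(2*N+k))) (Blk n w N k m)"
  proof (rule inj_onI)
    fix x y assume x: "x \<in> Blk n w N k m" and y: "y \<in> Blk n w N k m"
      and d: "drop (m * (2 * N + k)) x = drop (m * (2 * N + k)) y"
    have "take (m*(2*N+k)) x = take (m*(2*N+k)) y" using Blk_props[OF x] Blk_props[OF y] by simp
    then have "take (m*(2*N+k)) x @ drop (m*(2*N+k)) x = take (m*(2*N+k)) y @ drop (m*(2*N+k)) y"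
      using d by (simp only:)
    then show "x = y" by (simp only: append_take_drop_id)
  qed
  show "drop (m * (2 * N + k)) ` Blk n w N k m \<subseteq> {xs. set xs \<subseteq> alph n \<and> length xs \<le> 2 * N + k}"
  proof
    fix z assume "z \<in> drop (m * (2 * N + k)) ` Blk n w N k m"
    then obtain v where v: "v \<in> Blk n w N k m" and z: "z = drop (m * (2 * N + k)) v" by blast
    have "set z \<subseteq> set v" unfolding z by (rule set_drop_subset)
    then show "z \<in> {xs. set xs \<subseteq> alph n \<and> length xs \<le> 2 * N + k}"
      using Blk_props[OF v] unfolding z by auto
  qed
  show "finite {xs. set xs \<subseteq> alph n \<and> length xs \<le> 2 * N + k}"
    by (rule finite_lists_length_le[OF finite_alph])
qed



lemma pred_ucm: "Measurable.pred (uniform_count_measure A) P"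
  by (simp add: pred_def sets_uniform_count_measure space_uniform_count_measure)

lemma pred_PiM_ucm_coord: "i \<in> I \<Longrightarrow> Measurable.pred (PiM I (\<lambda>_. uniform_count_measure A)) (\<lambda>x. R (x i))"
  by (rule measurable_compose[where f="\<lambda>x. x i" and N="uniform_count_measure A" and g=R])
     (auto intro: pred_ucm measurable_component_singleton[where M="\<lambda>_. uniform_count_measure A", simplified])

lemma pred_nu_coord: "Measurable.pred (nu n) (\<lambda>w. R (w i))"
  unfolding nu_def by (rule pred_PiM_ucm_coord) simp

lemma pred_mu_set: "S \<subseteq> lists (alph n) \<Longrightarrow> Measurable.pred (mu n) (\<lambda>\<eta>. \<forall>v\<in>S. R v (\<eta> v))"
  unfolding mu_def
  by (intro pred_intros_countable_bounded pred_PiM_ucm_coord) auto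

lemma pred_pref: "Measurable.pred (nu n) (\<lambda>w. pref w l = u)"
proof -
  have pw: "(pref w l = u) = (length u = l \<and> (\<forall>i\<in>{..<l}. w i = u!i))" for w
    by (auto simp: pref_def list_eq_iff_nth_eq)
  have pr: "Measurable.pred (nu n) (\<lambda>w. length u = l \<and> (\<forall>i\<in>{..<l}. w i = u!i))"
  proof (rule pred_intros_logic(3))
    show "Measurable.pred (nu n) (\<lambda>w. length u = l)" by (rule measurable_const) simp
    show "Measurable.pred (nu n) (\<lambda>w. \<forall>i\<in>{..<l}. w i = u!i)"
    proof (rule pred_intros_finite(3))
      show "finite {..<l}" by simp
      fix i show "Measurable.pred (nu n) (\<lambda>w. w i = u!i)" by (rule pred_nu_coord)
    qed
  qed
  show ?thesis unfolding pw by (rule pr)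
qed

lemma pred_PatU: "Measurable.pred (mu n) (\<lambda>\<eta>. PatU n N k \<eta> u)"
proof -
  have 1: "Measurable.pred (mu n) (\<lambda>\<eta>. \<forall>v\<in>FU n u k. \<eta> v = 1)"
    by (rule pred_mu_set[OF FU_sub])
  have "GU n u N k - FU n u k \<subseteq> lists (alph n)" using GU_sub by blast
  then have 2: "Measurable.pred (mu n) (\<lambda>\<eta>. \<forall>v\<in>GU n u N k - FU n u k. \<eta> v = 2)"
    by (rule pred_mu_set)
  show ?thesis unfolding PatU_def using 1 2 by (rule pred_intros_logic(3))
qed

lemma pred_snd_coord: "Measurable.pred (M \<Otimes>\<^sub>M nu n) (\<lambda>z. (c::nat) < snd z i)"
proof -
  have "Measurable.pred (nu n) (\<lambda>w. c < w i)" by (rule pred_nu_coord)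
  then show ?thesis by (rule measurable_compose[OF measurable_snd])
qed

lemma pred_snd_pref: "Measurable.pred (M \<Otimes>\<^sub>M nu n) (\<lambda>z. pref (snd z) l = u)"
proof -
  have "Measurable.pred (nu n) (\<lambda>w. pref w l = u)" by (rule pred_pref)
  then show ?thesis by (rule measurable_compose[OF measurable_snd])
qed

lemma pred_fst_PatU: "Measurable.pred (mu n \<Otimes>\<^sub>M M) (\<lambda>z. PatU n N k (fst z) u)"
proof -
  have "Measurable.pred (mu n) (\<lambda>\<eta>. PatU n N k \<eta> u)" by (rule pred_PatU)
  then show ?thesis by (rule measurable_compose[OF measurable_fst])
qed

lemma pred_conj3: "Measurable.pred M A \<Longrightarrow> Measurable.pred M B \<Longrightarrow> Measurable.pred M C \<Longrightarrow>
   Measurable.pred M (\<lambda>x. A x \<and> (B x \<and> C x))"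
  by (intro pred_intros_logic(3))

lemma pred_Q:
  "Measurable.pred (mu n \<Otimes>\<^sub>M nu n)
    (\<lambda>z. \<exists>m. 4*n-4 < snd z (m*(2*N+k)) \<and> PatU n N k (fst z) (pref (snd z) (m*(2*N+k)+N)))"
proof -
  have r: "Measurable.pred (mu n \<Otimes>\<^sub>M nu n) (\<lambda>z. \<exists>m. \<exists>u. 4*n-4 < snd z (m*(2*N+k)) \<and> (pref (snd z) (m*(2*N+k)+N) = u \<and> PatU n N k (fst z) u))"
    by (intro pred_intros_countable(2) pred_conj3 pred_snd_coord pred_snd_pref pred_fst_PatU)
  have eq: "(4*n-4 < snd z (m*(2*N+k)) \<and> PatU n N k (fst z) (pref (snd z) (m*(2*N+k)+N)))
    = (\<exists>u. 4*n-4 < snd z (m*(2*N+k)) \<and> (pref (snd z) (m*(2*N+k)+N) = u \<and> PatU n N k (fst z) u))" for z m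
    by blast
  show ?thesis unfolding eq by (rule r)
qed



lemma measure_ucm:
  assumes "finite A" "A \<noteq> {}" "X \<subseteq> A"
  shows "measure (uniform_count_measure A) X = card X / card A"
proof -
  have cA: "card A > 0" using assms by (simp add: card_gt_0_iff)
  show ?thesis using assms by (simp add: measure_def emeasure_uniform_count_measure)
qed

lemma measure_PiM_ucm:
  assumes S: "finite S" and A: "finite A" "A \<noteq> {}" and X: "\<And>i. i \<in> S \<Longrightarrow> X i \<subseteq> A"
  shows "measure (PiM S (\<lambda>_. uniform_count_measure A)) (PiE S X) = (\<Prod>i\<in>S. measure (uniform_count_measure A) (X i))"
proof -
  have ps: "prob_space (uniform_count_measure A)" by (rule prob_space_uniform_count_measure[OF A])
  interpret product_prob_space "\<lambda>_. uniform_count_measure A" S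
    by (rule product_prob_spaceI) (rule ps)
  have "emeasure (PiM S (\<lambda>_. uniform_count_measure A)) (PiE S X) = (\<Prod>i\<in>S. emeasure (uniform_count_measure A) (X i))"
    by (rule emeasure_PiM[OF S]) (use X in \<open>auto simp: sets_uniform_count_measure\<close>)
  also have "\<dots> = (\<Prod>i\<in>S. ennreal (measure (uniform_count_measure A) (X i)))"
    using X A by (intro prod.cong) (auto simp: emeasure_uniform_count_measure measure_ucm)
  also have "\<dots> = ennreal (\<Prod>i\<in>S. measure (uniform_count_measure A) (X i))"
    by (simp add: prod_ennreal)
  finally have "emeasure (PiM S (\<lambda>_. uniform_count_measure A)) (PiE S X) = ennreal (\<Prod>i\<in>S. measure (uniform_count_measure A) (X i))" .
  then show ?thesis
    by (simp add: measure_def prod_nonneg)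
qed



lemma AE_mono: "AE x in M. P x \<Longrightarrow> (\<And>x. P x \<Longrightarrow> Q x) \<Longrightarrow> AE x in M. Q x"
  by (rule eventually_mono)

lemma alph_props:
  assumes "n \<ge> 4"
  shows "finite (alph n)" "alph n \<noteq> {}" "5*n-6 \<in> alph n" "4*n-4 < 5*n-6"
  using assms by (auto simp: alph_def)

lemma claim_a:
  assumes n: "n \<ge> 4" and L: "L > 0"
  shows "AE w in nu n. \<forall>m0. \<exists>m\<ge>m0. 4*n-4 < w (m*L)"
proof -
  define A where "A = alph n"
  have A: "finite A" "A \<noteq> {}" using alph_props[OF n] by (auto simp: A_def)
  define H where "H = {x\<in>A. 4*n-4 < x}"
  have HA: "H \<subseteq> A" by (auto simp: H_def)
  have "5*n-6 \<in> H" using alph_props[OF n] by (auto simp: H_def A_def)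
  then have Hne: "card H > 0" using A HA by (metis card_gt_0_iff empty_iff finite_subset)
  have cA: "card A > 0" using A by (simp add: card_gt_0_iff)
  define q where "q = measure (uniform_count_measure A) H"
  have q: "q > 0" unfolding q_def using measure_ucm[OF A HA] Hne cA by simp
  interpret V: product_prob_space "\<lambda>_::nat. uniform_count_measure A" "UNIV::nat set"
    by (rule product_prob_spaceI) (rule prob_space_uniform_count_measure[OF A])
  have "AE w in nu n. \<exists>m\<ge>m0. 4*n-4 < w (m*L)" for m0
  proof -
    have "AE x in PiM UNIV (\<lambda>_. uniform_count_measure A).
        \<exists>m. restrict x {(m0+m)*L} \<in> PiE {(m0+m)*L} (\<lambda>_. H)"
    proof (rule V.AE_exists_block)
      show "disjoint_family (\<lambda>m. {(m0 + m) * L})"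
        using L by (auto simp: disjoint_family_on_def)
      show "PiE {(m0 + m) * L} (\<lambda>_. H) \<in> sets (PiM {(m0 + m) * L} (\<lambda>_. uniform_count_measure A))" for m
        using HA by (intro sets_PiM_I_finite) (auto simp: sets_uniform_count_measure)
      show "q \<le> measure (PiM {(m0 + m) * L} (\<lambda>_. uniform_count_measure A)) (PiE {(m0 + m) * L} (\<lambda>_. H))" for m
        using measure_PiM_ucm[of "{(m0 + m) * L}" A "\<lambda>_. H"] A HA by (simp add: q_def)
    qed (use q in auto)
    then show ?thesis unfolding nu_def A_def[symmetric]
    proof (rule AE_mono)
      fix x assume "\<exists>m. restrict x {(m0+m)*L} \<in> PiE {(m0+m)*L} (\<lambda>_. H)"
      then obtain m where "restrict x {(m0+m)*L} \<in> PiE {(m0+m)*L} (\<lambda>_. H)" by blast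
      then have "x ((m0+m)*L) \<in> H" by (auto simp: PiE_iff)
      then show "\<exists>m'\<ge>m0. 4*n-4 < x (m'*L)" by (intro exI[of _ "m0+m"]) (auto simp: H_def)
    qed
  qed
  then show ?thesis by (simp add: AE_all_countable)
qed

lemma claim_b:
  assumes n: "n \<ge> 4" and N: "N \<ge> 1"
    and inf: "\<forall>m0. \<exists>m\<ge>m0. 4*n-4 < w (m*(2*N+k))"
  shows "AE \<eta> in mu n. \<exists>m. 4*n-4 < w (m*(2*N+k)) \<and> PatU n N k \<eta> (pref w (m*(2*N+k)+N))"
proof -
  define A where "A = alph n"
  have A: "finite A" "A \<noteq> {}" using alph_props[OF n] by (auto simp: A_def)
  define Z where "Z = {m. 4*n-4 < w (m*(2*N+k))}"
  have Zinf: "infinite Z" unfolding Z_def infinite_nat_iff_unbounded_le using inf by auto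
  define g where "g = enumerate Z"
  have gZ: "g j \<in> Z" for j unfolding g_def by (rule enumerate_in_set[OF Zinf])
  have ginj: "inj g"
  proof (rule strict_mono_imp_inj_on)
    show "strict_mono g" unfolding g_def using Zinf by (auto intro!: strict_monoI)
  qed
  define S where "S = (\<lambda>j. Blk n w N k (g j))"
  define c where "c = (\<lambda>j v. if v \<in> FU n (pref w (g j*(2*N+k)+N)) k then 1::nat else 2)"
  define B where "B = (\<lambda>j. PiE (S j) (\<lambda>v. {c j v}))"
  define C where "C = card {xs. set xs \<subseteq> alph n \<and> length xs \<le> 2*N+k}"
  have c12: "{c j v} \<subseteq> {1,2}" for j v by (auto simp: c_def)
  interpret U: product_prob_space "\<lambda>_::nat list. uniform_count_measure {1::nat,2}" "lists A"
    by (rule product_prob_spaceI) (rule prob_space_uniform_count_measure; auto)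
  have "AE \<eta> in PiM (lists A) (\<lambda>_. uniform_count_measure {1::nat,2}). \<exists>j. restrict \<eta> (S j) \<in> B j"
  proof (rule U.AE_exists_block)
    show "lists A \<noteq> {}" by auto
    show "S j \<subseteq> lists A" for j unfolding S_def A_def by (rule Blk_sub)
    show "finite (S j)" for j unfolding S_def by (rule finite_Blk)
    show "disjoint_family S"
      unfolding disjoint_family_on_def
    proof (intro ballI impI)
      fix i j :: nat assume "i \<noteq> j"
      then have "g i \<noteq> g j" using ginj by (auto dest: injD)
      then show "S i \<inter> S j = {}" unfolding S_def using Blk_div[of _ n w N k "g i"] Blk_div[of _ n w N k "g j"] by fastforce
    qed
    show "B j \<in> sets (PiM (S j) (\<lambda>_. uniform_count_measure {1::nat,2}))" for j
      unfolding B_def using c12 by (intro sets_PiM_I_finite) (auto simp: sets_uniform_count_measure finite_Blk S_def)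
    show "(1/2::real)^C > 0" by simp
    show "(1/2::real)^C \<le> measure (PiM (S j) (\<lambda>_. uniform_count_measure {1::nat,2})) (B j)" for j
    proof -
      have "measure (PiM (S j) (\<lambda>_. uniform_count_measure {1::nat,2})) (B j)
          = (\<Prod>v\<in>S j. measure (uniform_count_measure {1::nat,2}) {c j v})"
        unfolding B_def by (rule measure_PiM_ucm) (use c12 in \<open>auto simp: S_def finite_Blk\<close>)
      also have "\<dots> = (\<Prod>v\<in>S j. 1/2)"
        using c12 by (intro prod.cong refl) (subst measure_ucm, auto)
      also have "\<dots> = (1/2)^card (S j)" by simp
      finally have eq: "measure (PiM (S j) (\<lambda>_. uniform_count_measure {1::nat,2})) (B j) = (1/2)^card (S j)" .
      have "card (S j) \<le> C" unfolding S_def C_def by (rule card_Blk)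
      then have "(1/2::real)^C \<le> (1/2)^card (S j)" by (intro power_decreasing) auto
      then show ?thesis using eq by simp
    qed
  qed
  then show ?thesis unfolding mu_def A_def[symmetric]
  proof (rule AE_mono)
    fix \<eta> assume "\<exists>j. restrict \<eta> (S j) \<in> B j"
    then obtain j where j: "restrict \<eta> (S j) \<in> B j" by blast
    then have val: "\<eta> v = c j v" if "v \<in> S j" for v using that by (auto simp: B_def PiE_iff)
    have "PatU n N k \<eta> (pref w (g j*(2*N+k)+N))"
      unfolding PatU_def
    proof (intro conjI ballI)
      fix v assume v: "v \<in> FU n (pref w (g j*(2*N+k)+N)) k"
      then have "v \<in> S j" by (simp add: S_def Blk_def)
      then show "\<eta> v = 1" using val v by (simp add: c_def)
    next
      fix v assume v: "v \<in> GU n (pref w (g j*(2*N+k)+N)) N k - FU n (pref w (g j*(2*N+k)+N)) k"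
      then have "v \<in> S j" by (simp add: S_def Blk_def)
      then show "\<eta> v = 2" using val v by (simp add: c_def)
    qed
    moreover have "4*n-4 < w (g j*(2*N+k))" using gZ[of j] by (simp add: Z_def)
    ultimately show "\<exists>m. 4*n-4 < w (m*(2*N+k)) \<and> PatU n N k \<eta> (pref w (m*(2*N+k)+N))" by blast
  qed
qed


lemma key:
  assumes n: "n \<ge> 4" and N: "N \<ge> 1"
  shows "AE \<eta> in mu n. AE w in nu n. \<exists>l\<ge>N.
        (\<forall>j<k. \<forall>v\<in>cyl n (l+j) (pref w l). \<eta> v = 1) \<and>
        (\<forall>v \<in> (\<Union>j<2*N+k. cyl n (l-N+j) (pref w (l-N))) - (\<Union>j<k. cyl n (l+j) (pref w l)).
            \<eta> v = 2) \<and>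
        w (l-N) > 4*n-4"
proof -
  have psmu: "prob_space (mu n)" unfolding mu_def
    by (intro prob_space_PiM prob_space_uniform_count_measure) auto
  have psnu: "prob_space (nu n)" unfolding nu_def using alph_props[OF n]
    by (intro prob_space_PiM prob_space_uniform_count_measure) auto
  interpret pair_sigma_finite "mu n" "nu n"
    unfolding pair_sigma_finite_def using psmu psnu by (auto intro: prob_space_imp_sigma_finite)
  define Q where "Q = (\<lambda>\<eta> w. \<exists>m. 4*n-4 < w (m*(2*N+k)) \<and> PatU n N k \<eta> (pref w (m*(2*N+k)+N)))"
  have 1: "AE w in nu n. AE \<eta> in mu n. Q \<eta> w"
  proof (rule AE_mono[OF claim_a[OF n, of "2*N+k"]])
    show "0 < 2*N+k" using N by simp
  next
    fix w assume "\<forall>m0. \<exists>m\<ge>m0. 4*n-4 < w (m*(2*N+k))"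
    then show "AE \<eta> in mu n. Q \<eta> w" unfolding Q_def by (rule claim_b[OF n N])
  qed
  have meas: "{z \<in> space (mu n \<Otimes>\<^sub>M nu n). Q (fst z) (snd z)} \<in> sets (mu n \<Otimes>\<^sub>M nu n)"
    using pred_Q[of n N k] unfolding Q_def pred_def .
  have 2: "AE \<eta> in mu n. AE w in nu n. Q \<eta> w" using 1 AE_commute[OF meas] by simp
  show ?thesis
    using 2
  proof (rule AE_mono)
    fix \<eta> assume "AE w in nu n. Q \<eta> w"
    then show "AE w in nu n. \<exists>l\<ge>N.
        (\<forall>j<k. \<forall>v\<in>cyl n (l+j) (pref w l). \<eta> v = 1) \<and>
        (\<forall>v \<in> (\<Union>j<2*N+k. cyl n (l-N+j) (pref w (l-N))) - (\<Union>j<k. cyl n (l+j) (pref w l)).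
            \<eta> v = 2) \<and>
        w (l-N) > 4*n-4"
    proof (rule AE_mono)
      fix w assume "Q \<eta> w"
      then obtain m where m: "4*n-4 < w (m*(2*N+k))" "PatU n N k \<eta> (pref w (m*(2*N+k)+N))"
        unfolding Q_def by blast
      define l where "l = m*(2*N+k)+N"
      have lN: "N \<le> l" "l - N = m*(2*N+k)" by (auto simp: l_def)
      show "\<exists>l\<ge>N.
        (\<forall>j<k. \<forall>v\<in>cyl n (l+j) (pref w l). \<eta> v = 1) \<and>
        (\<forall>v \<in> (\<Union>j<2*N+k. cyl n (l-N+j) (pref w (l-N))) - (\<Union>j<k. cyl n (l+j) (pref w l)).
            \<eta> v = 2) \<and>
        w (l-N) > 4*n-4"
        using PatU_pref[OF m(2)[folded l_def] lN(1)] m(1) lN by (intro exI[of _ l]) auto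
    qed
  qed
qed

theorem proposition7p1:
  fixes n :: nat
  assumes "even n" and "n \<ge> 4"
  shows "AE \<eta> in mu n. random_choice n \<eta>"
proof -
  let ?P = "\<lambda>\<eta> w N k. \<exists>l\<ge>N.
        (\<forall>j<k. \<forall>v\<in>cyl n (l+j) (pref w l). \<eta> v = 1) \<and>
        (\<forall>v \<in> (\<Union>j<2*N+k. cyl n (l-N+j) (pref w (l-N))) - (\<Union>j<k. cyl n (l+j) (pref w l)).
            \<eta> v = 2) \<and>
        w (l-N) > 4*n-4"
  have "AE \<eta> in mu n. AE w in nu n. (N \<ge> 1 \<longrightarrow> ?P \<eta> w N k)" for N k
  proof (cases "N \<ge> 1")
    case True
    show ?thesis using key[OF assms(2) True, of k] by (rule AE_mono) (erule AE_mono, blast)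
  next
    case False
    then show ?thesis by simp
  qed
  then have "AE \<eta> in mu n. \<forall>N. \<forall>k. AE w in nu n. (N \<ge> 1 \<longrightarrow> ?P \<eta> w N k)"
    by (simp add: AE_all_countable)
  then show ?thesis unfolding random_choice_def
  proof (rule AE_mono)
    fix \<eta> assume "\<forall>N. \<forall>k. AE w in nu n. (N \<ge> 1 \<longrightarrow> ?P \<eta> w N k)"
    then have "AE w in nu n. \<forall>N. \<forall>k. (N \<ge> 1 \<longrightarrow> ?P \<eta> w N k)"
      by (simp add: AE_all_countable)
    then show "AE w in nu n. \<forall>N\<ge>1. \<forall>k::nat. ?P \<eta> w N k"
      by (rule AE_mono) simp
  qed
qed

end
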